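(* Let $\Gamma$ be a weighted digraph with vertex set $\{1,\dots,n\}$, $n>1$, without loops and with strictly positive arc weights, let $L$ be its Laplacian matrix, $d$ its in-forest dimension, and $\tilde J=\sigma_{n-d}^{-1}Q_{n-d}$ its normalized matrix of maximum in-forests. Then: (i) $L+\tilde J^{*}$ is nonsingular; (ii) $\operatorname{rank}L=n-\operatorname{rank}\tilde J=n-d$; (iii) $\mathcal N(L)=\mathcal R(\tilde J)$ and $\mathcal R(L)=\mathcal N(\tilde J)$; (iv) $\mathcal R(L)\cap\mathcal R(\tilde J)=\{\mathbf 0\}$; (v) $\operatorname{ind}L=1$; (vi) $\tilde J$ is the eigenprojection of $L$.
   Context: $W=(w_{ij})$ is the matrix of arc weights ($w_{ij}>0$ iff there is an arc $i\to j$, else $0$). The Laplacian $L=(\ell_{ij})$: $\ell_{ij}=-w_{ij}$ for $j\ne i$, $\ell_{ii}=\sum_{k\ne i}w_{ik}$. The weight of a subgraph is the product of its arc weights (1 if no arcs); the weight of a set of subgraphs is the sum of their weights. A converging tree is a weakly connected digraph with one vertex (the root) of outdegree 0 and all others of outdegree 1; an in-forest is a spanning subgraph of $\Gamma$ whose weak components are converging trees. The in-forest dimension $d$ is the minimal number of trees in an in-forest of $\Gamma$ (so in-forests have at most $n-d$ arcs). $\sigma_k$ is the total weight of in-forests with $k$ arcs; $Q_k=(q^k_{ij})$ with $q^k_{ij}$ the total weight of in-forests with $k$ arcs in which $i$ lies in a tree rooted at $j$. $A^*$ is the conjugate transpose, $\mathcal R(A)$ the range and $\mathcal N(A)$ the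 null space of $A$. The index $\operatorname{ind}A$ of a square matrix is the least $k\ge0$ with $\operatorname{rank}A^{k+1}=\operatorname{rank}A^k$. The eigenprojection of $A$ is the idempotent matrix $B$ with $\mathcal R(B)=\mathcal N(A^\nu)$ and $\mathcal N(B)=\mathcal R(A^\nu)$, where $\nu=\operatorname{ind}A$. *)

theory Defs
  imports "HOL-Analysis.Analysis"
begin

text \<open>Vertices are the elements of a finite type 'n (playing the role of {1,...,n}, n = CARD('n)).
  A weighted digraph is given by its weight matrix W; there is an arc i->j iff W$i$j > 0.\<close>

definition arcs :: "real^'n^'n \<Rightarrow> ('n \<times> 'n) set" where
  "arcs W = {(i,j). W $ i $ j > 0}"

definition laplacian :: "real^'n^'n \<Rightarrow> real^'n^'n" where
  "laplacian W = (\<chi> i j. if i = j then (\<Sum>k\<in>UNIV - {i}. W $ i $ k) else - W $ i $ j)"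

definition outdeg :: "('n \<times> 'n) set \<Rightarrow> 'n \<Rightarrow> nat" where
  "outdeg A v = card {u. (v,u) \<in> A}"

definition weak_comp :: "('n \<times> 'n) set \<Rightarrow> 'n \<Rightarrow> 'n set" where
  "weak_comp F i = {j. (i,j) \<in> (F \<union> F\<inverse>)\<^sup>*}"

definition weakly_connected :: "'n set \<Rightarrow> ('n \<times> 'n) set \<Rightarrow> bool" where
  "weakly_connected C A \<longleftrightarrow> (\<forall>x\<in>C. \<forall>y\<in>C. (x,y) \<in> (A \<union> A\<inverse>)\<^sup>*)"

definition converging_tree :: "'n set \<Rightarrow> ('n \<times> 'n) set \<Rightarrow> bool" where
  "converging_tree C A \<longleftrightarrow> A \<subseteq> C \<times> C \<and> C \<noteq> {} \<and> weakly_connected C A \<and>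
     (\<exists>!r. r \<in> C \<and> outdeg A r = 0) \<and>
     (\<forall>v\<in>C. outdeg A v = 0 \<or> outdeg A v = 1)"

definition in_forest :: "real^'n^'n \<Rightarrow> ('n \<times> 'n) set \<Rightarrow> bool" where
  "in_forest W F \<longleftrightarrow> F \<subseteq> arcs W \<and>
     (\<forall>i. converging_tree (weak_comp F i) (F \<inter> (weak_comp F i \<times> weak_comp F i)))"

definition num_trees :: "('n \<times> 'n) set \<Rightarrow> nat" where
  "num_trees F = card (range (weak_comp F))"

definition forest_dim :: "real^'n^'n \<Rightarrow> nat" where
  "forest_dim W = Min (num_trees ` {F. in_forest W F})"

definition subgraph_weight :: "real^'n^'n \<Rightarrow> ('n \<times> 'n) set \<Rightarrow> real" where
  "subgraph_weight W F = (\<Prod>(i,j)\<in>F. W $ i $ j)"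

definition sigma :: "real^'n^'n \<Rightarrow> nat \<Rightarrow> real" where
  "sigma W k = (\<Sum>F\<in>{F. in_forest W F \<and> card F = k}. subgraph_weight W F)"

text \<open>i lies in a tree rooted at j: j is in the weak component of i and has out-degree 0.\<close>
definition forest_matrix :: "real^'n^'n \<Rightarrow> nat \<Rightarrow> real^'n^'n" where
  "forest_matrix W k = (\<chi> i j. \<Sum>F\<in>{F. in_forest W F \<and> card F = k \<and>
        j \<in> weak_comp F i \<and> outdeg F j = 0}. subgraph_weight W F)"

definition norm_max_forest_matrix :: "real^'n^'n \<Rightarrow> real^'n^'n" where
  "norm_max_forest_matrix W =
     (1 / sigma W (CARD('n) - forest_dim W)) *\<^sub>R forest_matrix W (CARD('n) - forest_dim W)"

definition null_space :: "real^'n^'m \<Rightarrow> (real^'n) set" where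
  "null_space A = {x. A *v x = 0}"

definition col_range :: "real^'n^'m \<Rightarrow> (real^'m) set" where
  "col_range A = range (\<lambda>x. A *v x)"

definition mat_pow :: "real^'n^'n \<Rightarrow> nat \<Rightarrow> real^'n^'n" where
  "mat_pow A k = ((\<lambda>B. B ** A) ^^ k) (mat 1)"

definition mat_index :: "real^'n^'n \<Rightarrow> nat" where
  "mat_index A = (LEAST k. rank (mat_pow A (Suc k)) = rank (mat_pow A k))"

definition eigenprojection :: "real^'n^'n \<Rightarrow> real^'n^'n \<Rightarrow> bool" where
  "eigenprojection A B \<longleftrightarrow> B ** B = B \<and>
     col_range B = null_space (mat_pow A (mat_index A)) \<and>
     null_space B = col_range (mat_pow A (mat_index A))"

end

theory Submission
  imports Defs
begin


definition detg :: "('a \<times> 'a) set \<Rightarrow> bool" where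
  "detg F \<longleftrightarrow> (\<forall>v a b. (v,a) \<in> F \<longrightarrow> (v,b) \<in> F \<longrightarrow> a = b)"

definition isroot :: "('a \<times> 'a) set \<Rightarrow> 'a \<Rightarrow> bool" where
  "isroot F r \<longleftrightarrow> (\<forall>u. (r,u) \<notin> F)"

definition forest :: "('a \<times> 'a) set \<Rightarrow> bool" where
  "forest F \<longleftrightarrow> detg F \<and> (\<forall>v. \<exists>r. (v,r) \<in> F\<^sup>* \<and> isroot F r)"

lemma forestD:
  assumes "forest F" shows "detg F" "\<exists>r. (v,r) \<in> F\<^sup>* \<and> isroot F r"
  using assms unfolding forest_def by auto

definition rt :: "('a \<times> 'a) set \<Rightarrow> 'a \<Rightarrow> 'a" where
  "rt F v = (THE r. (v,r) \<in> F\<^sup>* \<and> isroot F r)"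

lemma root_unique:
  assumes d: "detg F" and 1: "(v,r1) \<in> F\<^sup>*" "isroot F r1" and 2: "(v,r2) \<in> F\<^sup>*" "isroot F r2"
  shows "r1 = r2"
  using 1 2
proof (induction v rule: converse_rtrancl_induct)
  case base
  from \<open>(r1,r2) \<in> F\<^sup>*\<close> have "r1 = r2 \<or> (\<exists>y. (r1,y) \<in> F)"
    by (auto elim: converse_rtranclE)
  then show ?case using base.prems(1) unfolding isroot_def by blast
next
  case (step v x)
  from \<open>(v,r2) \<in> F\<^sup>*\<close> have "v = r2 \<or> (\<exists>y. (v,y) \<in> F \<and> (y,r2) \<in> F\<^sup>*)"
    by (auto elim: converse_rtranclE)
  then show ?case
  proof
    assume "v = r2"
    then show ?thesis using step.hyps(1) step.prems(3) unfolding isroot_def by blast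
  next
    assume "\<exists>y. (v,y) \<in> F \<and> (y,r2) \<in> F\<^sup>*"
    then obtain y where "(v,y) \<in> F" "(y,r2) \<in> F\<^sup>*" by blast
    then have "y = x" using d \<open>(v,x) \<in> F\<close> unfolding detg_def by blast
    then show ?thesis using step.IH step.prems \<open>(y, r2) \<in> F\<^sup>*\<close> by blast
  qed
qed

lemma rt_prop:
  assumes "forest F"
  shows "(v, rt F v) \<in> F\<^sup>* \<and> isroot F (rt F v)"
proof -
  have d: "detg F" using forestD[OF assms] by blast
  obtain r where r: "(v,r) \<in> F\<^sup>*" "isroot F r" using forestD(2)[OF assms] by blast
  have "\<exists>!r. (v,r) \<in> F\<^sup>* \<and> isroot F r"
  proof (rule ex1I[of _ r])
    show "(v,r) \<in> F\<^sup>* \<and> isroot F r" using r by blast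
    fix y assume "(v,y) \<in> F\<^sup>* \<and> isroot F y"
    then show "y = r" using root_unique[OF d, of v y r] r by blast
  qed
  then show ?thesis unfolding rt_def by (rule theI')
qed

lemma rt_eq:
  assumes "forest F" "(v,r) \<in> F\<^sup>*" "isroot F r"
  shows "rt F v = r"
proof -
  have "detg F" using forestD[OF assms(1)] by blast
  then show ?thesis using rt_prop[OF assms(1), of v] root_unique[of F v r "rt F v"] assms(2,3) by blast
qed

lemma rt_root:
  assumes "forest F" "isroot F r"
  shows "rt F r = r"
  using rt_eq[OF assms(1) rtrancl_refl assms(2)] .

lemma rt_step:
  assumes "forest F" "(u,v) \<in> F"
  shows "rt F u = rt F v"
proof -
  have "(u, rt F v) \<in> F\<^sup>*" using rt_prop[OF assms(1), of v] assms(2)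
    by (meson converse_rtrancl_into_rtrancl)
  then show ?thesis using rt_eq[OF assms(1)] rt_prop[OF assms(1), of v] by blast
qed

lemma rt_comp:
  assumes "forest F" "(u,v) \<in> (F \<union> F\<inverse>)\<^sup>*"
  shows "rt F u = rt F v"
  using assms(2)
proof (induction rule: rtrancl_induct)
  case base
  then show ?case by simp
next
  case (step y z)
  then have "(y,z) \<in> F \<or> (z,y) \<in> F" by blast
  then show ?case using rt_step[OF assms(1), of y z] rt_step[OF assms(1), of z y] step.IH by metis
qed

lemma outdeg_0_iff:
  fixes F :: "('n::finite \<times> 'n) set"
  shows "outdeg F v = 0 \<longleftrightarrow> isroot F v"
proof -
  have "finite {u. (v,u) \<in> F}" by simp
  then show ?thesis unfolding outdeg_def isroot_def by simp
qed

lemma wc_sym: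
  assumes "(x,y) \<in> (F \<union> F\<inverse>)\<^sup>*"
  shows "(y,x) \<in> (F \<union> F\<inverse>)\<^sup>*"
proof -
  have "(F \<union> F\<inverse>)\<inverse> = F \<union> F\<inverse>" by auto
  then show ?thesis using assms rtrancl_converseI[of x y "F \<union> F\<inverse>"] by simp
qed

lemma in_forest_iff:
  fixes W :: "real^'n^'n"
  shows "in_forest W F \<longleftrightarrow> F \<subseteq> arcs W \<and> forest F"
proof
  assume H: "in_forest W F"
  define E where "E = F \<union> F\<inverse>"
  have sub: "F \<subseteq> arcs W" using H in_forest_def by blast
  have tree: "converging_tree (weak_comp F v) (F \<inter> (weak_comp F v \<times> weak_comp F v))" for v
    using H in_forest_def by blast
  have vin: "v \<in> weak_comp F v" for v unfolding weak_comp_def by simp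
  have succ_in: "(v,x) \<in> E\<^sup>* \<Longrightarrow> (x,u) \<in> F \<Longrightarrow> u \<in> weak_comp F v" for v x u
    unfolding weak_comp_def E_def using rtrancl_into_rtrancl[of v x "F \<union> F\<inverse>" u] by auto
  have od_eq: "(v,x) \<in> E\<^sup>* \<Longrightarrow> {u. (x,u) \<in> F \<inter> (weak_comp F v \<times> weak_comp F v)} = {u. (x,u) \<in> F}" for v x
    using succ_in unfolding weak_comp_def E_def by auto
  have od1: "outdeg F v \<le> 1" for v
  proof -
    have "outdeg (F \<inter> (weak_comp F v \<times> weak_comp F v)) v = 0 \<or> outdeg (F \<inter> (weak_comp F v \<times> weak_comp F v)) v = 1"
      using tree[of v] vin unfolding converging_tree_def by blast
    moreover have "outdeg (F \<inter> (weak_comp F v \<times> weak_comp F v)) v = outdeg F v"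
      unfolding outdeg_def using od_eq[of v v] by simp
    ultimately show ?thesis by linarith
  qed
  have det: "detg F"
    unfolding detg_def
  proof (intro allI impI)
    fix v a b assume "(v,a) \<in> F" "(v,b) \<in> F"
    moreover have "card {u. (v,u) \<in> F} \<le> Suc 0" using od1[of v] unfolding outdeg_def by simp
    ultimately show "a = b" using card_le_Suc0_iff_eq[of "{u. (v,u) \<in> F}"] by auto
  qed
  have reach: "\<exists>r. (v,r) \<in> F\<^sup>* \<and> isroot F r" for v
  proof -
    obtain r where r: "r \<in> weak_comp F v" "outdeg (F \<inter> (weak_comp F v \<times> weak_comp F v)) r = 0"
      using tree[of v] unfolding converging_tree_def by blast
    have vr: "(v,r) \<in> E\<^sup>*" using r(1) unfolding weak_comp_def E_def by simp
    have "outdeg (F \<inter> (weak_comp F v \<times> weak_comp F v)) r = outdeg F r"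
      unfolding outdeg_def using od_eq[OF vr] by simp
    then have "outdeg F r = 0" using r(2) by simp
    then have root: "isroot F r" using outdeg_0_iff by blast
    have "(r,x) \<in> E\<^sup>* \<Longrightarrow> (x,r) \<in> F\<^sup>*" for x
    proof (induction rule: rtrancl_induct)
      case base
      then show ?case by simp
    next
      case (step y z)
      show ?case
      proof (cases "(z,y) \<in> F")
        case True
        then show ?thesis using step.IH by (meson converse_rtrancl_into_rtrancl)
      next
        case False
        then have yz: "(y,z) \<in> F" using step.hyps(2) E_def by auto
        from step.IH show ?thesis
        proof (cases rule: converse_rtranclE)
          case base
          then show ?thesis using root yz isroot_def by metis
        next
          case (step y')
          then have "y' = z" using det yz detg_def by metis
          then show ?thesis using step by simp
        qed
      qed
    qed
    moreover have "(r,v) \<in> E\<^sup>*" using vr wc_sym E_def by metis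
    ultimately show ?thesis using root by blast
  qed
  show "F \<subseteq> arcs W \<and> forest F" using sub det reach forest_def by blast
next
  assume H: "F \<subseteq> arcs W \<and> forest F"
  then have fo: "forest F" and sub: "F \<subseteq> arcs W" by auto
  have det: "detg F" using fo forest_def by blast
  have "converging_tree (weak_comp F i) (F \<inter> (weak_comp F i \<times> weak_comp F i))" for i
  proof -
    define C where "C = weak_comp F i"
    define A where "A = F \<inter> (C \<times> C)"
    define E where "E = F \<union> F\<inverse>"
    have iC: "i \<in> C" unfolding C_def weak_comp_def by simp
    have inC: "x \<in> C \<longleftrightarrow> (i,x) \<in> E\<^sup>*" for x unfolding C_def weak_comp_def E_def by simp
    have succC: "x \<in> C \<Longrightarrow> (x,u) \<in> F \<Longrightarrow> u \<in> C" for x u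
      using inC E_def rtrancl_into_rtrancl[of i x "F \<union> F\<inverse>" u] by auto
    have rtC: "x \<in> C \<Longrightarrow> rt F x = rt F i" for x
      using inC rt_comp[OF fo] E_def by metis
    have toA: "(i,x) \<in> E\<^sup>* \<Longrightarrow> (i,x) \<in> (A \<union> A\<inverse>)\<^sup>*" for x
    proof (induction rule: rtrancl_induct)
      case base
      then show ?case by simp
    next
      case (step y z)
      then have "y \<in> C" "z \<in> C" using inC by (auto intro: rtrancl_into_rtrancl)
      then have "(y,z) \<in> A \<union> A\<inverse>" using step.hyps(2) A_def E_def by auto
      then show ?case using step.IH by (meson rtrancl.rtrancl_into_rtrancl)
    qed
    have wcon: "weakly_connected C A"
      unfolding weakly_connected_def
    proof (intro ballI)
      fix x y assume "x \<in> C" "y \<in> C"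
      then have "(i,x) \<in> (A \<union> A\<inverse>)\<^sup>*" "(i,y) \<in> (A \<union> A\<inverse>)\<^sup>*" using toA inC by auto
      then show "(x,y) \<in> (A \<union> A\<inverse>)\<^sup>*" using wc_sym by (metis rtrancl_trans)
    qed
    have odA: "{u. (x,u) \<in> A} = (if x \<in> C then {u. (x,u) \<in> F} else {})" for x
      using succC A_def by auto
    have root_iff: "x \<in> C \<Longrightarrow> outdeg A x = 0 \<longleftrightarrow> isroot F x" for x
      using odA[of x] outdeg_0_iff[of F x] unfolding outdeg_def by simp
    have ex1: "\<exists>!r. r \<in> C \<and> outdeg A r = 0"
    proof
      show "rt F i \<in> C \<and> outdeg A (rt F i) = 0"
        using rt_prop[OF fo, of i] inC root_iff E_def
        by (metis (no_types, lifting) in_rtrancl_UnI)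
    next
      fix r assume "r \<in> C \<and> outdeg A r = 0"
      then show "r = rt F i" using root_iff rtC rt_root[OF fo] by metis
    qed
    have od01: "\<forall>v\<in>C. outdeg A v = 0 \<or> outdeg A v = 1"
    proof
      fix v assume "v \<in> C"
      have "card {u. (v,u) \<in> A} \<le> Suc 0"
        using det card_le_Suc0_iff_eq[of "{u. (v,u) \<in> A}"] unfolding detg_def A_def by auto
      then show "outdeg A v = 0 \<or> outdeg A v = 1" unfolding outdeg_def by linarith
    qed
    show ?thesis unfolding converging_tree_def
      using wcon ex1 od01 iC A_def C_def by blast
  qed
  then show "in_forest W F" using sub in_forest_def by blast
qed

lemma rooted_iff:
  fixes F :: "('n::finite \<times> 'n) set"
  assumes "forest F"
  shows "(j \<in> weak_comp F i \<and> outdeg F j = 0) \<longleftrightarrow> rt F i = j"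
proof
  assume "j \<in> weak_comp F i \<and> outdeg F j = 0"
  then show "rt F i = j"
    using rt_comp[OF assms] rt_root[OF assms] outdeg_0_iff unfolding weak_comp_def by (metis mem_Collect_eq)
next
  assume "rt F i = j"
  then show "j \<in> weak_comp F i \<and> outdeg F j = 0"
    using rt_prop[OF assms, of i] outdeg_0_iff unfolding weak_comp_def
    by (metis in_rtrancl_UnI mem_Collect_eq)
qed

lemma num_trees_eq:
  fixes F :: "('n::finite \<times> 'n) set"
  assumes "forest F"
  shows "num_trees F = card {r. isroot F r}"
proof -
  have wc_eq: "weak_comp F i = weak_comp F (rt F i)" for i
  proof -
    have "(i, rt F i) \<in> (F \<union> F\<inverse>)\<^sup>*" using rt_prop[OF assms, of i] by (meson in_rtrancl_UnI)
    then show ?thesis unfolding weak_comp_def using wc_sym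
      by (metis (no_types, opaque_lifting) rtrancl_trans)
  qed
  have "bij_betw (weak_comp F) {r. isroot F r} (range (weak_comp F))"
  proof (rule bij_betw_imageI)
    show "inj_on (weak_comp F) {r. isroot F r}"
    proof (rule inj_onI)
      fix x y assume "x \<in> {r. isroot F r}" "y \<in> {r. isroot F r}" "weak_comp F x = weak_comp F y"
      then have "(x,y) \<in> (F \<union> F\<inverse>)\<^sup>*" unfolding weak_comp_def by auto
      then show "x = y" using rt_comp[OF assms] rt_root[OF assms] \<open>x \<in> _\<close> \<open>y \<in> _\<close> by (metis mem_Collect_eq)
    qed
    show "weak_comp F ` {r. isroot F r} = range (weak_comp F)"
      using wc_eq rt_prop[OF assms] by blast
  qed
  then show ?thesis unfolding num_trees_def by (metis bij_betw_same_card)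
qed

lemma card_forest:
  fixes F :: "('n::finite \<times> 'n) set"
  assumes "forest F"
  shows "card F + card {r. isroot F r} = CARD('n)"
proof -
  have det: "detg F" using assms forest_def by blast
  have "bij_betw fst F {v. \<not> isroot F v}"
  proof (rule bij_betw_imageI)
    show "inj_on fst F" using det unfolding detg_def inj_on_def by auto
    show "fst ` F = {v. \<not> isroot F v}" unfolding isroot_def by force
  qed
  then have "card F = card {v. \<not> isroot F v}" by (rule bij_betw_same_card)
  also have "\<dots> = card (UNIV - {r. isroot F r})" by (simp add: Collect_neg_eq Compl_eq_Diff_UNIV)
  also have "\<dots> = CARD('n) - card {r. isroot F r}" by (simp add: card_Diff_subset)
  finally show ?thesis
    by (metis (no_types, lifting) add.commute card_mono finite_class.finite_UNIV le_add_diff_inverse subset_UNIV)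
qed

lemma roots_pos:
  fixes F :: "('n::finite \<times> 'n) set"
  assumes "forest F"
  shows "card {r. isroot F r} \<ge> 1"
proof -
  have "{r. isroot F r} \<noteq> {}" using rt_prop[OF assms] by blast
  then show ?thesis by (simp add: Suc_le_eq card_gt_0_iff)
qed

lemma attach:
  assumes fo: "forest F" and ri: "isroot F i" and k: "rt F k \<noteq> i"
  shows "forest (insert (i,k) F)"
    and "rt (insert (i,k) F) v = (if rt F v = i then rt F k else rt F v)"
proof -
  define G where "G = insert (i,k) F"
  have det: "detg G" using fo ri unfolding G_def forest_def detg_def isroot_def by blast
  have FG: "F\<^sup>* \<subseteq> G\<^sup>*" unfolding G_def by (simp add: rtrancl_mono subset_insertI)
  have rootG: "isroot F r \<Longrightarrow> r \<noteq> i \<Longrightarrow> isroot G r" for r unfolding G_def isroot_def by auto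
  have key: "(v, if rt F v = i then rt F k else rt F v) \<in> G\<^sup>* \<and> isroot G (if rt F v = i then rt F k else rt F v)" for v
  proof (cases "rt F v = i")
    case True
    have "(v,i) \<in> G\<^sup>*" using rt_prop[OF fo, of v] True FG by auto
    moreover have "(i,k) \<in> G" unfolding G_def by simp
    moreover have "(k, rt F k) \<in> G\<^sup>*" using rt_prop[OF fo, of k] FG by auto
    ultimately have "(v, rt F k) \<in> G\<^sup>*" by (meson rtrancl.rtrancl_into_rtrancl rtrancl_trans)
    then show ?thesis using True rootG k rt_prop[OF fo, of k] by simp
  next
    case False
    then show ?thesis using rt_prop[OF fo, of v] FG rootG by auto
  qed
  have foG: "forest G" using det key unfolding forest_def by blast
  then show "forest (insert (i,k) F)" unfolding G_def .
  show "rt (insert (i,k) F) v = (if rt F v = i then rt F k else rt F v)"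
    using rt_eq[OF foG] key unfolding G_def by blast
qed

lemma cycle_back:
  assumes d: "detg G" and c: "(x,x) \<in> G\<^sup>+" and "(x,y) \<in> G\<^sup>*"
  shows "(y,x) \<in> G\<^sup>*"
  using assms(3)
proof (induction rule: rtrancl_induct)
  case base
  then show ?case by simp
next
  case (step y z)
  show ?case
  proof (cases "y = x")
    case True
    from c obtain z' where "(x,z') \<in> G" "(z',x) \<in> G\<^sup>*" by (meson converse_tranclE trancl_into_rtrancl r_into_rtrancl)
    then show ?thesis using True step.hyps(2) d detg_def by metis
  next
    case False
    from step.IH False obtain z' where "(y,z') \<in> G" "(z',x) \<in> G\<^sup>*" by (meson converse_rtranclE)
    then show ?thesis using step.hyps(2) d detg_def by metis
  qed
qed

lemma detach:
  assumes fo: "forest G" and ip: "(i,p) \<in> G"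
  shows "forest (G - {(i,p)})" "isroot (G - {(i,p)}) i" "rt (G - {(i,p)}) p \<noteq> i"
proof -
  define F where "F = G - {(i,p)}"
  have detG: "detg G" using fo forest_def by blast
  have det: "detg F" using detG unfolding F_def detg_def by blast
  have ri: "isroot F i" using detG ip unfolding F_def isroot_def detg_def by blast
  have reach: "(v,r) \<in> G\<^sup>* \<Longrightarrow> isroot G r \<Longrightarrow> \<exists>r'. (v,r') \<in> F\<^sup>* \<and> isroot F r'" for v r
  proof (induction v rule: converse_rtrancl_induct)
    case base
    then show ?case unfolding isroot_def F_def by blast
  next
    case (step v x)
    then obtain r' where r': "(x,r') \<in> F\<^sup>*" "isroot F r'" by blast
    show ?case
    proof (cases "(v,x) = (i,p)")
      case True
      then show ?thesis using ri by blast
    next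
      case False
      then have "(v,x) \<in> F" using step.hyps(1) F_def by blast
      then show ?thesis using r' by (meson converse_rtrancl_into_rtrancl)
    qed
  qed
  have foF: "forest F" unfolding forest_def using det reach rt_prop[OF fo] by blast
  then show "forest (G - {(i,p)})" unfolding F_def .
  show "isroot (G - {(i,p)}) i" using ri F_def by simp
  show "rt (G - {(i,p)}) p \<noteq> i"
  proof
    assume "rt (G - {(i,p)}) p = i"
    then have "(p,i) \<in> F\<^sup>*" using rt_prop[OF foF, of p] F_def by simp
    then have "(p,i) \<in> G\<^sup>*" unfolding F_def by (meson Diff_subset rtrancl_mono subsetD)
    then have cyc: "(i,i) \<in> G\<^sup>+" using ip by (meson rtrancl_into_trancl2)
    have "(rt G i, i) \<in> G\<^sup>*" using cycle_back[OF detG cyc] rt_prop[OF fo, of i] by blast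
    then have "rt G i = i" using rt_prop[OF fo, of i] by (metis converse_rtranclE isroot_def)
    then show False using rt_prop[OF fo, of i] ip isroot_def by metis
  qed
qed



definition Fs :: "real^'n^'n \<Rightarrow> nat \<Rightarrow> ('n \<times> 'n) set set" where
  "Fs W s = {F. in_forest W F \<and> card F = s}"
definition Rs :: "real^'n^'n \<Rightarrow> 'n \<Rightarrow> nat \<Rightarrow> ('n \<times> 'n) set set" where
  "Rs W i s = {F \<in> Fs W s. isroot F i}"
definition Ns :: "real^'n^'n \<Rightarrow> 'n \<Rightarrow> nat \<Rightarrow> ('n \<times> 'n) set set" where
  "Ns W i s = {F \<in> Fs W s. \<not> isroot F i}"
definition Ps :: "real^'n^'n \<Rightarrow> 'n \<Rightarrow> ('n \<times> 'n) set \<Rightarrow> 'n set" where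
  "Ps W i F = {k. 0 < W$i$k \<and> rt F k \<noteq> i}"

lemma Fs_forest: "F \<in> Fs W s \<Longrightarrow> forest F"
  unfolding Fs_def using in_forest_iff by blast

lemma weight_insert:
  fixes F :: "('n::finite \<times> 'n) set"
  assumes "(i,k) \<notin> F"
  shows "subgraph_weight W (insert (i,k) F) = W$i$k * subgraph_weight W F"
  unfolding subgraph_weight_def using assms by (simp add: prod.insert)

lemma attach_bij:
  "bij_betw (\<lambda>(F,k). insert (i,k) F) (Sigma (Rs W i s) (Ps W i)) (Ns W i (Suc s))"
proof (rule bij_betw_imageI)
  show "inj_on (\<lambda>(F,k). insert (i,k) F) (Sigma (Rs W i s) (Ps W i))"
  proof (rule inj_onI)
    fix x y
    assume x: "x \<in> Sigma (Rs W i s) (Ps W i)" and y: "y \<in> Sigma (Rs W i s) (Ps W i)"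
      and e: "(\<lambda>(F,k). insert (i,k) F) x = (\<lambda>(F,k). insert (i,k) F) y"
    obtain F k where xe: "x = (F,k)" by (cases x)
    obtain F' k' where ye: "y = (F',k')" by (cases y)
    have A: "(F,k) \<in> Sigma (Rs W i s) (Ps W i)" "(F',k') \<in> Sigma (Rs W i s) (Ps W i)"
      using x y xe ye by auto
    have eq: "insert (i,k) F = insert (i,k') F'" using e xe ye by simp
    have r: "isroot F i" "isroot F' i" using A unfolding Rs_def by auto
    then have n: "(i,k) \<notin> F'" "(i,k') \<notin> F" "(i,k) \<notin> F" "(i,k') \<notin> F'" unfolding isroot_def by auto
    have "(i,k) \<in> insert (i,k') F'" using eq by blast
    then have kk: "k = k'" using n by blast
    have "F = insert (i,k) F - {(i,k)}" using n by blast
    also have "\<dots> = insert (i,k') F' - {(i,k')}" using eq kk by simp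
    also have "\<dots> = F'" using n by blast
    finally show "x = y" using kk xe ye by simp
  qed
  show "(\<lambda>(F,k). insert (i,k) F) ` Sigma (Rs W i s) (Ps W i) = Ns W i (Suc s)"
  proof
    show "(\<lambda>(F,k). insert (i,k) F) ` Sigma (Rs W i s) (Ps W i) \<subseteq> Ns W i (Suc s)"
    proof clarify
      fix F k assume A: "F \<in> Rs W i s" "k \<in> Ps W i F"
      have fo: "forest F" and ri: "isroot F i" and sub: "F \<subseteq> arcs W" and c: "card F = s"
        using A(1) unfolding Rs_def Fs_def in_forest_iff by auto
      have w: "0 < W$i$k" and k: "rt F k \<noteq> i" using A(2) unfolding Ps_def by auto
      have foG: "forest (insert (i,k) F)" using attach(1)[OF fo ri k] .
      have "(i,k) \<notin> F" using ri isroot_def by metis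
      then have "card (insert (i,k) F) = Suc s" using c by simp
      moreover have "insert (i,k) F \<subseteq> arcs W" using sub w unfolding arcs_def by auto
      moreover have "\<not> isroot (insert (i,k) F) i" unfolding isroot_def by auto
      ultimately show "insert (i,k) F \<in> Ns W i (Suc s)"
        unfolding Ns_def Fs_def using foG in_forest_iff by blast
    qed
  next
    show "Ns W i (Suc s) \<subseteq> (\<lambda>(F,k). insert (i,k) F) ` Sigma (Rs W i s) (Ps W i)"
    proof
      fix G assume G: "G \<in> Ns W i (Suc s)"
      have fo: "forest G" and nr: "\<not> isroot G i" and sub: "G \<subseteq> arcs W" and c: "card G = Suc s"
        using G unfolding Ns_def Fs_def in_forest_iff by auto
      obtain p where ip: "(i,p) \<in> G" using nr unfolding isroot_def by blast
      define F where "F = G - {(i,p)}"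
      have foF: "forest F" and ri: "isroot F i" and rp: "rt F p \<noteq> i"
        using detach[OF fo ip] unfolding F_def by auto
      have w: "0 < W$i$p" using sub ip unfolding arcs_def by auto
      have cF: "card F = s" unfolding F_def using c ip by simp
      have subF: "F \<subseteq> arcs W" using sub F_def by blast
      have "F \<in> Rs W i s" unfolding Rs_def Fs_def using foF ri cF subF in_forest_iff by blast
      moreover have "p \<in> Ps W i F" unfolding Ps_def using w rp by simp
      moreover have "G = insert (i,p) F" unfolding F_def using ip by blast
      ultimately show "G \<in> (\<lambda>(F,k). insert (i,k) F) ` Sigma (Rs W i s) (Ps W i)" by force
    qed
  qed
qed

lemma antisym_sum:
  fixes c a :: "'a \<Rightarrow> real"
  assumes "finite S"
  shows "(\<Sum>p\<in>S. c p * (\<Sum>k\<in>S. c k * (a p - a k))) = 0"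
proof -
  have "(\<Sum>p\<in>S. c p * (\<Sum>k\<in>S. c k * (a p - a k))) =
        (\<Sum>p\<in>S. \<Sum>k\<in>S. c p * c k * a p) - (\<Sum>p\<in>S. \<Sum>k\<in>S. c p * c k * a k)"
    by (simp add: sum_distrib_left right_diff_distrib sum_subtractf algebra_simps)
  also have "(\<Sum>p\<in>S. \<Sum>k\<in>S. c p * c k * a k) = (\<Sum>k\<in>S. \<Sum>p\<in>S. c p * c k * a k)"
    by (rule sum.swap)
  also have "\<dots> = (\<Sum>p\<in>S. \<Sum>k\<in>S. c p * c k * a p)"
    by (simp add: mult.commute)
  finally show ?thesis by simp
qed

lemma fm_eq:
  fixes W :: "real^'n^'n"
  shows "forest_matrix W s $ i $ j = (\<Sum>F\<in>Fs W s. if rt F i = j then subgraph_weight W F else 0)"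
proof -
  have "{F. in_forest W F \<and> card F = s \<and> j \<in> weak_comp F i \<and> outdeg F j = 0} = {F \<in> Fs W s. rt F i = j}"
  proof -
    have "in_forest W F \<Longrightarrow> (j \<in> weak_comp F i \<and> outdeg F j = 0) = (rt F i = j)" for F
      using rooted_iff[of F j i] in_forest_iff[of W F] by simp
    then show ?thesis unfolding Fs_def by auto
  qed
  then show ?thesis unfolding forest_matrix_def by (simp add: sum.inter_filter)
qed

lemma sigma_eq: "sigma W s = (\<Sum>F\<in>Fs W s. subgraph_weight W F)"
  unfolding sigma_def Fs_def by simp



lemma key_identity:
  fixes W :: "real^'n^'n"
  assumes nonneg: "\<forall>i j. W$i$j \<ge> 0"
  shows "(\<Sum>k\<in>UNIV. W$i$k * (forest_matrix W s $i$j - forest_matrix W s $k$j))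
         = (if i = j then sigma W (Suc s) else 0) - forest_matrix W (Suc s) $ i $ j"
proof -
  define w where "w = subgraph_weight W"
  define e where "e = (\<lambda>F k. if rt F k = j then 1 else (0::real))"
  define \<delta> where "\<delta> = (if i = j then 1 else (0::real))"
  define g where "g = (\<lambda>F. \<Sum>k\<in>UNIV. W$i$k * (e F i - e F k))"
  have fmq: "forest_matrix W t $ k $ j = (\<Sum>F\<in>Fs W t. w F * e F k)" for t k
    unfolding fm_eq w_def e_def by (rule sum.cong) auto
  have W0: "W$i$k = 0" if "\<not> 0 < W$i$k" for k
    using nonneg that by (meson antisym_conv not_less)
  have step1: "(\<Sum>k\<in>UNIV. W$i$k * (forest_matrix W s $i$j - forest_matrix W s $k$j)) = (\<Sum>F\<in>Fs W s. w F * g F)"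
  proof -
    have d: "forest_matrix W s $i$j - forest_matrix W s $k$j = (\<Sum>F\<in>Fs W s. w F * (e F i - e F k))" for k
      unfolding fmq by (simp add: sum_subtractf[symmetric] right_diff_distrib)
    have "(\<Sum>k\<in>UNIV. W$i$k * (forest_matrix W s $i$j - forest_matrix W s $k$j))
        = (\<Sum>k\<in>UNIV. \<Sum>F\<in>Fs W s. W$i$k * (w F * (e F i - e F k)))"
      unfolding d by (simp add: sum_distrib_left)
    also have "\<dots> = (\<Sum>F\<in>Fs W s. \<Sum>k\<in>UNIV. W$i$k * (w F * (e F i - e F k)))" by (rule sum.swap)
    also have "\<dots> = (\<Sum>F\<in>Fs W s. w F * g F)" unfolding g_def
      by (simp add: sum_distrib_left algebra_simps)
    finally show ?thesis .
  qed
  have split: "Fs W s = Rs W i s \<union> Ns W i s" and disj: "Rs W i s \<inter> Ns W i s = {}"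
    unfolding Rs_def Ns_def by auto
  have step3: "(\<Sum>F\<in>Rs W i s. w F * g F) = (\<Sum>G\<in>Ns W i (Suc s). w G * (\<delta> - e G i))"
  proof -
    have gR: "g F = (\<Sum>k\<in>Ps W i F. W$i$k * (\<delta> - e F k))" if F: "F \<in> Rs W i s" for F
    proof -
      have fo: "forest F" and ri: "isroot F i" using F Fs_forest unfolding Rs_def by auto
      have eFi: "e F i = \<delta>" using rt_root[OF fo ri] unfolding e_def \<delta>_def by auto
      have "g F = (\<Sum>k\<in>UNIV. W$i$k * (\<delta> - e F k))" unfolding g_def eFi ..
      also have "\<dots> = (\<Sum>k\<in>Ps W i F. W$i$k * (\<delta> - e F k))"
      proof (rule sum.mono_neutral_right)
        show "finite (UNIV::'n set)" by simp
        show "Ps W i F \<subseteq> UNIV" by simp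
        show "\<forall>k\<in>UNIV - Ps W i F. W$i$k * (\<delta> - e F k) = 0"
        proof
          fix k assume "k \<in> UNIV - Ps W i F"
          then have "\<not> 0 < W$i$k \<or> rt F k = i" unfolding Ps_def by auto
          then show "W$i$k * (\<delta> - e F k) = 0"
          proof
            assume "\<not> 0 < W$i$k" then show ?thesis using W0 by simp
          next
            assume "rt F k = i" then have "e F k = \<delta>" unfolding e_def \<delta>_def by simp
            then show ?thesis by simp
          qed
        qed
      qed
      finally show ?thesis .
    qed
    have "(\<Sum>F\<in>Rs W i s. w F * g F) = (\<Sum>F\<in>Rs W i s. \<Sum>k\<in>Ps W i F. w F * (W$i$k * (\<delta> - e F k)))"
      by (rule sum.cong[OF refl]) (simp add: gR sum_distrib_left)
    also have "\<dots> = (\<Sum>x\<in>Sigma (Rs W i s) (Ps W i). (\<lambda>(F,k). w F * (W$i$k * (\<delta> - e F k))) x)"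
      by (rule sum.Sigma) auto
    also have "\<dots> = (\<Sum>x\<in>Sigma (Rs W i s) (Ps W i). (\<lambda>G. w G * (\<delta> - e G i)) ((\<lambda>(F,k). insert (i,k) F) x))"
    proof (rule sum.cong[OF refl], clarify)
      fix F k assume A: "F \<in> Rs W i s" "k \<in> Ps W i F"
      have fo: "forest F" and ri: "isroot F i" using A(1) Fs_forest unfolding Rs_def by auto
      have kk: "rt F k \<noteq> i" using A(2) unfolding Ps_def by auto
      have nin: "(i,k) \<notin> F" using ri unfolding isroot_def by auto
      have wi: "w (insert (i,k) F) = W$i$k * w F" unfolding w_def using weight_insert[OF nin] .
      have "rt (insert (i,k) F) i = rt F k" using attach(2)[OF fo ri kk, of i] rt_root[OF fo ri] by simp
      then have "e (insert (i,k) F) i = e F k" unfolding e_def by simp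
      then show "w F * (W$i$k * (\<delta> - e F k)) = w (insert (i,k) F) * (\<delta> - e (insert (i,k) F) i)"
        using wi by simp
    qed
    also have "\<dots> = (\<Sum>G\<in>Ns W i (Suc s). w G * (\<delta> - e G i))"
      by (rule sum.reindex_bij_betw[OF attach_bij])
    finally show ?thesis .
  qed
  have step4: "(\<Sum>F\<in>Ns W i s. w F * g F) = 0"
  proof (cases s)
    case 0
    have "Ns W i 0 = {}" unfolding Ns_def Fs_def isroot_def by auto
    then show ?thesis using 0 by simp
  next
    case (Suc s')
    have "(\<Sum>F\<in>Ns W i s. w F * g F)
        = (\<Sum>x\<in>Sigma (Rs W i s') (Ps W i). (\<lambda>G. w G * g G) ((\<lambda>(F,k). insert (i,k) F) x))"
      unfolding Suc by (rule sum.reindex_bij_betw[OF attach_bij, symmetric])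
    also have "\<dots> = (\<Sum>x\<in>Sigma (Rs W i s') (Ps W i).
        (\<lambda>(H,p). w H * (W$i$p * (\<Sum>k\<in>Ps W i H. W$i$k * (e H p - e H k)))) x)"
    proof (rule sum.cong[OF refl], clarify)
      fix H p assume A: "H \<in> Rs W i s'" "p \<in> Ps W i H"
      have fo: "forest H" and ri: "isroot H i" using A(1) Fs_forest unfolding Rs_def by auto
      have pp: "rt H p \<noteq> i" using A(2) unfolding Ps_def by auto
      have nin: "(i,p) \<notin> H" using ri unfolding isroot_def by auto
      define G where "G = insert (i,p) H"
      have rtG: "rt G v = (if rt H v = i then rt H p else rt H v)" for v
        unfolding G_def using attach(2)[OF fo ri pp] .
      have eGi: "e G i = e H p" unfolding e_def using rtG[of i] rt_root[OF fo ri] by simp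
      have "g G = (\<Sum>k\<in>UNIV. W$i$k * (e G i - e G k))" unfolding g_def ..
      also have "\<dots> = (\<Sum>k\<in>Ps W i H. W$i$k * (e G i - e G k))"
      proof (rule sum.mono_neutral_right)
        show "finite (UNIV::'n set)" by simp
        show "Ps W i H \<subseteq> UNIV" by simp
        show "\<forall>k\<in>UNIV - Ps W i H. W$i$k * (e G i - e G k) = 0"
        proof
          fix k assume "k \<in> UNIV - Ps W i H"
          then have "\<not> 0 < W$i$k \<or> rt H k = i" unfolding Ps_def by auto
          then show "W$i$k * (e G i - e G k) = 0"
          proof
            assume "\<not> 0 < W$i$k" then show ?thesis using W0 by simp
          next
            assume "rt H k = i" then have "e G k = e G i" using eGi rtG[of k] unfolding e_def by simp
            then show ?thesis by simp
          qed
        qed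
      qed
      also have "\<dots> = (\<Sum>k\<in>Ps W i H. W$i$k * (e H p - e H k))"
      proof (rule sum.cong[OF refl])
        fix k assume "k \<in> Ps W i H"
        then have "rt H k \<noteq> i" unfolding Ps_def by auto
        then have "e G k = e H k" using rtG[of k] unfolding e_def by simp
        then show "W$i$k * (e G i - e G k) = W$i$k * (e H p - e H k)" using eGi by simp
      qed
      finally have gG: "g G = (\<Sum>k\<in>Ps W i H. W$i$k * (e H p - e H k))" .
      have wi: "w G = W$i$p * w H" unfolding w_def G_def using weight_insert[OF nin] .
      show "w (insert (i,p) H) * g (insert (i,p) H) = w H * (W$i$p * (\<Sum>k\<in>Ps W i H. W$i$k * (e H p - e H k)))"
        using gG wi unfolding G_def by simp
    qed
    also have "\<dots> = (\<Sum>H\<in>Rs W i s'. \<Sum>p\<in>Ps W i H. w H * (W$i$p * (\<Sum>k\<in>Ps W i H. W$i$k * (e H p - e H k))))"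
      by (rule sum.Sigma[symmetric]) auto
    also have "\<dots> = (\<Sum>H\<in>Rs W i s'. w H * (\<Sum>p\<in>Ps W i H. W$i$p * (\<Sum>k\<in>Ps W i H. W$i$k * (e H p - e H k))))"
      by (simp add: sum_distrib_left)
    also have "\<dots> = 0"
      using antisym_sum[of "Ps W i _" "\<lambda>k. W$i$k"] by simp
    finally show ?thesis .
  qed
  have step5: "(\<Sum>G\<in>Ns W i (Suc s). w G * (\<delta> - e G i)) = \<delta> * sigma W (Suc s) - forest_matrix W (Suc s) $ i $ j"
  proof -
    have "(\<Sum>G\<in>Fs W (Suc s). w G * (\<delta> - e G i)) = (\<Sum>G\<in>Ns W i (Suc s). w G * (\<delta> - e G i))"
    proof (rule sum.mono_neutral_right)
      show "finite (Fs W (Suc s))" by simp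
      show "Ns W i (Suc s) \<subseteq> Fs W (Suc s)" unfolding Ns_def by auto
      show "\<forall>G\<in>Fs W (Suc s) - Ns W i (Suc s). w G * (\<delta> - e G i) = 0"
      proof
        fix G assume G: "G \<in> Fs W (Suc s) - Ns W i (Suc s)"
        then have fo: "forest G" and ri: "isroot G i" using Fs_forest unfolding Ns_def by auto
        have "e G i = \<delta>" using rt_root[OF fo ri] unfolding e_def \<delta>_def by auto
        then show "w G * (\<delta> - e G i) = 0" by simp
      qed
    qed
    moreover have "(\<Sum>G\<in>Fs W (Suc s). w G * (\<delta> - e G i)) = \<delta> * sigma W (Suc s) - forest_matrix W (Suc s) $ i $ j"
      unfolding fmq sigma_eq w_def
      by (simp add: right_diff_distrib sum_subtractf sum_distrib_left algebra_simps)
    ultimately show ?thesis by simp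
  qed
  have "(\<Sum>F\<in>Fs W s. w F * g F) = (\<Sum>F\<in>Rs W i s. w F * g F) + (\<Sum>F\<in>Ns W i s. w F * g F)"
    unfolding split by (rule sum.union_disjoint) (use disj in auto)
  then show ?thesis using step1 step3 step4 step5 unfolding \<delta>_def by simp
qed



lemma lap_mat:
  fixes W M :: "real^'n^'n"
  shows "(laplacian W ** M)$i$j = (\<Sum>k\<in>UNIV. W$i$k * (M$i$j - M$k$j))"
proof -
  have "(laplacian W ** M)$i$j = (\<Sum>k\<in>UNIV. laplacian W $i$k * M$k$j)"
    unfolding matrix_matrix_mult_def by simp
  also have "\<dots> = laplacian W $i$i * M$i$j + (\<Sum>k\<in>UNIV-{i}. laplacian W $i$k * M$k$j)"
    by (simp add: sum.remove)
  also have "(\<Sum>k\<in>UNIV-{i}. laplacian W $i$k * M$k$j) = (\<Sum>k\<in>UNIV-{i}. - (W$i$k * M$k$j))"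
    by (rule sum.cong) (auto simp: laplacian_def)
  also have "laplacian W $i$i * M$i$j = (\<Sum>k\<in>UNIV-{i}. W$i$k * M$i$j)"
    by (simp add: laplacian_def sum_distrib_right)
  also have "(\<Sum>k\<in>UNIV-{i}. W$i$k * M$i$j) + (\<Sum>k\<in>UNIV-{i}. - (W$i$k * M$k$j))
      = (\<Sum>k\<in>UNIV-{i}. W$i$k * (M$i$j - M$k$j))"
    by (simp add: sum.distrib[symmetric] right_diff_distrib)
  also have "\<dots> = (\<Sum>k\<in>UNIV. W$i$k * (M$i$j - M$k$j))"
    by (simp add: sum.remove[of UNIV i "\<lambda>k. W$i$k * (M$i$j - M$k$j)"])
  finally show ?thesis .
qed

lemma lap_vec:
  fixes W :: "real^'n^'n"
  shows "(laplacian W *v z)$i = (\<Sum>k\<in>UNIV. W$i$k * (z$i - z$k))"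
proof -
  have "(laplacian W *v z)$i = (\<Sum>k\<in>UNIV. laplacian W $i$k * z$k)"
    unfolding matrix_vector_mult_def by simp
  also have "\<dots> = laplacian W $i$i * z$i + (\<Sum>k\<in>UNIV-{i}. laplacian W $i$k * z$k)"
    by (simp add: sum.remove)
  also have "(\<Sum>k\<in>UNIV-{i}. laplacian W $i$k * z$k) = (\<Sum>k\<in>UNIV-{i}. - (W$i$k * z$k))"
    by (rule sum.cong) (auto simp: laplacian_def)
  also have "laplacian W $i$i * z$i = (\<Sum>k\<in>UNIV-{i}. W$i$k * z$i)"
    by (simp add: laplacian_def sum_distrib_right)
  also have "(\<Sum>k\<in>UNIV-{i}. W$i$k * z$i) + (\<Sum>k\<in>UNIV-{i}. - (W$i$k * z$k))
      = (\<Sum>k\<in>UNIV-{i}. W$i$k * (z$i - z$k))"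
    by (simp add: sum.distrib[symmetric] right_diff_distrib)
  also have "\<dots> = (\<Sum>k\<in>UNIV. W$i$k * (z$i - z$k))"
    by (simp add: sum.remove[of UNIV i "\<lambda>k. W$i$k * (z$i - z$k)"])
  finally show ?thesis .
qed

lemma empty_forest: "forest {}"
  unfolding forest_def detg_def isroot_def by auto

lemma dims:
  fixes W :: "real^'n^'n"
  shows "\<exists>F0. in_forest W F0 \<and> card F0 = CARD('n) - forest_dim W"
    and "in_forest W F \<Longrightarrow> card F \<le> CARD('n) - forest_dim W"
    and "1 \<le> forest_dim W" and "forest_dim W \<le> CARD('n)"
proof -
  define IF where "IF = {F. in_forest W F}"
  have nt: "num_trees F = CARD('n) - card F" "card F \<le> CARD('n)" if "F \<in> IF" for F
  proof -
    have fo: "forest F" using that in_forest_iff unfolding IF_def by blast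
    show "num_trees F = CARD('n) - card F" "card F \<le> CARD('n)"
      using num_trees_eq[OF fo] card_forest[OF fo] by auto
  qed
  have ne: "IF \<noteq> {}" unfolding IF_def using in_forest_iff[of W "{}"] empty_forest by auto
  have fin: "finite (num_trees ` IF)" by simp
  have d: "forest_dim W = Min (num_trees ` IF)" unfolding forest_dim_def IF_def ..
  have "forest_dim W \<in> num_trees ` IF" unfolding d using fin ne by (intro Min_in) auto
  then obtain F0 where F0: "F0 \<in> IF" "num_trees F0 = forest_dim W" by auto
  have le: "forest_dim W \<le> num_trees F" if "F \<in> IF" for F
    unfolding d using fin that by (intro Min_le) auto
  show "\<exists>F0. in_forest W F0 \<and> card F0 = CARD('n) - forest_dim W"
    using F0 nt[OF F0(1)] unfolding IF_def by (intro exI[of _ F0]) auto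
  show "in_forest W F \<Longrightarrow> card F \<le> CARD('n) - forest_dim W"
    using le nt unfolding IF_def by fastforce
  have fo0: "forest F0" using F0(1) in_forest_iff unfolding IF_def by blast
  show "1 \<le> forest_dim W" using F0(2) num_trees_eq[OF fo0] roots_pos[OF fo0] by simp
  show "forest_dim W \<le> CARD('n)" using F0 nt[OF F0(1)] by simp
qed

lemma weight_pos:
  fixes W :: "real^'n^'n"
  assumes "in_forest W F"
  shows "subgraph_weight W F > 0"
proof -
  have "F \<subseteq> arcs W" using assms in_forest_iff by blast
  then show ?thesis unfolding subgraph_weight_def arcs_def
    by (intro prod_pos) auto
qed

lemma sigma_max_pos:
  fixes W :: "real^'n^'n"
  shows "sigma W (CARD('n) - forest_dim W) > 0"
proof -
  obtain F0 where F0: "in_forest W F0" "card F0 = CARD('n) - forest_dim W" using dims(1) by blast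
  show ?thesis unfolding sigma_eq
  proof (rule sum_pos)
    show "finite (Fs W (CARD('n) - forest_dim W))" by simp
    show "Fs W (CARD('n) - forest_dim W) \<noteq> {}" using F0 unfolding Fs_def by auto
    show "\<And>F. F \<in> Fs W (CARD('n) - forest_dim W) \<Longrightarrow> 0 < subgraph_weight W F"
      using weight_pos unfolding Fs_def by auto
  qed
qed

lemma Fs_over:
  fixes W :: "real^'n^'n"
  shows "Fs W (Suc (CARD('n) - forest_dim W)) = {}"
  using dims(2)[of W] unfolding Fs_def by fastforce

lemma LQ_zero:
  fixes W :: "real^'n^'n"
  assumes nonneg: "\<forall>i j. W$i$j \<ge> 0"
  shows "laplacian W ** forest_matrix W (CARD('n) - forest_dim W) = 0"
proof -
  let ?m = "CARD('n) - forest_dim W"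
  have s0: "sigma W (Suc ?m) = 0" unfolding sigma_eq Fs_over by simp
  have q0: "forest_matrix W (Suc ?m) $ i $ j = 0" for i j unfolding fm_eq Fs_over by simp
  show ?thesis
    unfolding vec_eq_iff using key_identity[OF nonneg] s0 q0 by (simp add: lap_mat)
qed

lemma LQ_prev:
  fixes W :: "real^'n^'n"
  assumes nonneg: "\<forall>i j. W$i$j \<ge> 0"
  shows "laplacian W ** forest_matrix W s = sigma W (Suc s) *\<^sub>R mat 1 - forest_matrix W (Suc s)"
  unfolding vec_eq_iff using key_identity[OF nonneg] by (simp add: lap_mat mat_def)

lemma J_form:
  fixes W :: "real^'n^'n"
  assumes nonneg: "\<forall>i j. W$i$j \<ge> 0"
  shows "\<exists>Y. norm_max_forest_matrix W = mat 1 - laplacian W ** Y"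
proof -
  let ?m = "CARD('n) - forest_dim W"
  let ?s = "sigma W ?m"
  have spos: "?s > 0" using sigma_max_pos .
  show ?thesis
  proof (cases ?m)
    case 0
    have F0: "Fs W 0 = {{}}"
      unfolding Fs_def using in_forest_iff[of W "{}"] empty_forest by auto
    have "norm_max_forest_matrix W = mat 1"
      unfolding norm_max_forest_matrix_def 0 vec_eq_iff
      by (simp add: sigma_eq fm_eq F0 mat_def subgraph_weight_def rt_root[OF empty_forest] isroot_def)
    then show ?thesis by (intro exI[of _ 0]) simp
  next
    case (Suc m')
    define Y where "Y = (1 / ?s) *\<^sub>R forest_matrix W m'"
    have "laplacian W ** Y = (1 / ?s) *\<^sub>R (laplacian W ** forest_matrix W m')"
      unfolding Y_def vec_eq_iff matrix_matrix_mult_def by (simp add: sum_distrib_left algebra_simps)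
    also have "\<dots> = (1 / ?s) *\<^sub>R (?s *\<^sub>R mat 1 - forest_matrix W ?m)"
      using LQ_prev[OF nonneg, of m'] Suc by simp
    also have "\<dots> = mat 1 - norm_max_forest_matrix W"
      unfolding norm_max_forest_matrix_def using spos by (simp add: algebra_simps)
    finally show ?thesis by (intro exI[of _ Y]) simp
  qed
qed

lemma LJ_zero:
  fixes W :: "real^'n^'n"
  assumes nonneg: "\<forall>i j. W$i$j \<ge> 0"
  shows "laplacian W ** norm_max_forest_matrix W = 0"
proof -
  have "laplacian W ** norm_max_forest_matrix W =
     (1 / sigma W (CARD('n) - forest_dim W)) *\<^sub>R (laplacian W ** forest_matrix W (CARD('n) - forest_dim W))"
    unfolding norm_max_forest_matrix_def vec_eq_iff matrix_matrix_mult_def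
    by (simp add: sum_distrib_left algebra_simps)
  then show ?thesis using LQ_zero[OF nonneg] by simp
qed

lemma trace_J:
  fixes W :: "real^'n^'n"
  shows "trace (norm_max_forest_matrix W) = real (forest_dim W)"
proof -
  let ?m = "CARD('n) - forest_dim W"
  let ?s = "sigma W ?m"
  have spos: "?s > 0" using sigma_max_pos .
  have roots: "card {i. rt F i = i} = forest_dim W" if "F \<in> Fs W ?m" for F
  proof -
    have fo: "forest F" and c: "card F = ?m" using that Fs_forest unfolding Fs_def by auto
    have "{i. rt F i = i} = {r. isroot F r}"
      using rt_root[OF fo] rt_prop[OF fo] by metis
    then show ?thesis using card_forest[OF fo] c dims(4)[of W] by simp
  qed
  have "(\<Sum>i\<in>UNIV. forest_matrix W ?m $ i $ i) = (\<Sum>i\<in>UNIV. \<Sum>F\<in>Fs W ?m. if rt F i = i then subgraph_weight W F else 0)"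
    by (simp add: fm_eq)
  also have "\<dots> = (\<Sum>F\<in>Fs W ?m. \<Sum>i\<in>UNIV. if rt F i = i then subgraph_weight W F else 0)"
    by (rule sum.swap)
  also have "\<dots> = (\<Sum>F\<in>Fs W ?m. real (card {i. rt F i = i}) * subgraph_weight W F)"
    by (rule sum.cong[OF refl]) (simp add: sum.If_cases)
  also have "\<dots> = (\<Sum>F\<in>Fs W ?m. real (forest_dim W) * subgraph_weight W F)"
    by (rule sum.cong[OF refl]) (simp add: roots)
  also have "\<dots> = real (forest_dim W) * ?s"
    by (simp add: sigma_eq sum_distrib_left)
  finally have t: "(\<Sum>i\<in>UNIV. forest_matrix W ?m $ i $ i) = real (forest_dim W) * ?s" .
  show ?thesis
    unfolding trace_def norm_max_forest_matrix_def using t spos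
    by (simp add: sum_divide_distrib[symmetric])
qed



lemma col_range_iff: "x \<in> col_range (A::real^'n^'m) \<longleftrightarrow> (\<exists>z. x = A *v z)"
  unfolding col_range_def by auto

lemma null_space_iff: "x \<in> null_space (A::real^'n^'m) \<longleftrightarrow> A *v x = 0"
  unfolding null_space_def by auto

lemma subspace_null: "subspace (null_space (A::real^'n^'m))"
  unfolding subspace_def null_space_def
  by (simp add: matrix_vector_right_distrib matrix_vector_mult_scaleR)

lemma subspace_range: "subspace (col_range (A::real^'n^'m))"
  unfolding subspace_def col_range_def
proof (intro conjI ballI allI)
  show "0 \<in> range ((*v) A)" by (metis matrix_vector_mult_0_right rangeI)
  fix x y assume "x \<in> range ((*v) A)" "y \<in> range ((*v) A)"
  then obtain u v where "x = A *v u" "y = A *v v" by auto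
  then show "x + y \<in> range ((*v) A)" by (metis matrix_vector_right_distrib rangeI)
next
  fix c :: real and x assume "x \<in> range ((*v) A)"
  then obtain u where "x = A *v u" by auto
  then show "c *\<^sub>R x \<in> range ((*v) A)" by (metis matrix_vector_mult_scaleR rangeI)
qed

lemma rank_col_range: "rank (A::real^'n^'m) = dim (col_range A)"
  unfolding col_range_def by (rule rank_dim_range)

lemma rank_nullity:
  fixes A :: "real^'n^'m"
  shows "rank A + dim (null_space A) = CARD('n)"
proof -
  have ns: "null_space A = {y \<in> UNIV. \<forall>x \<in> span (rows A). orthogonal x y}"
  proof (intro set_eqI iffI)
    fix y assume "y \<in> null_space A"
    then have "A *v y = 0" unfolding null_space_def by simp
    then show "y \<in> {y \<in> UNIV. \<forall>x \<in> span (rows A). orthogonal x y}"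
      using orthogonal_nullspace_rowspace orthogonal_commute by blast
  next
    fix y assume "y \<in> {y \<in> UNIV. \<forall>x \<in> span (rows A). orthogonal x y}"
    then have o: "orthogonal (row i A) y" for i
      using span_base[of "row i A" "rows A"] unfolding rows_def by blast
    have "(A *v y) $ i = 0" for i
    proof -
      have "row i A = A $ i" unfolding row_def by (simp add: vec_eq_iff)
      then show ?thesis using o[of i] unfolding orthogonal_def by (simp add: matrix_vector_mul_component)
    qed
    then show "y \<in> null_space A" unfolding null_space_def by (simp add: vec_eq_iff)
  qed
  have "dim {y \<in> UNIV. \<forall>x \<in> span (rows A). orthogonal x y} + dim (span (rows A)) = dim (UNIV :: (real^'n) set)"
    by (rule dim_subspace_orthogonal_to_vectors) auto
  then show ?thesis unfolding row_rank_def ns[symmetric] dim_span by simp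
qed

lemma trace_idem:
  fixes J :: "real^'n^'n"
  assumes idem: "J ** J = J"
  shows "trace J = real (rank J)"
proof -
  define S where "S = col_range J"
  have subS: "subspace S" unfolding S_def by (rule subspace_range)
  obtain B where B: "B \<subseteq> S" "pairwise orthogonal B" "\<And>x. x \<in> B \<Longrightarrow> norm x = 1"
    "independent B" "card B = dim S" "span B = S"
    using orthonormal_basis_subspace[OF subS] by blast
  have finB: "finite B" using B(4) finiteI_independent by blast
  define P :: "real^'n^'n" where "P = (\<chi> a c. \<Sum>b\<in>B. b$a * b$c)"
  have Pv: "P *v x = (\<Sum>b\<in>B. (x \<bullet> b) *\<^sub>R b)" for x
    unfolding P_def vec_eq_iff matrix_vector_mult_def
    apply (simp add: inner_vec_def sum_distrib_left sum_distrib_right sum.swap[of _ UNIV B])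
    apply (intro allI sum.cong refl)
    apply (simp add: mult_ac)
    done
  have fixJ: "J *v b = b" if "b \<in> S" for b
  proof -
    have "b \<in> col_range J" using that S_def by simp
    then obtain z where "b = J *v z" using col_range_iff by blast
    then show ?thesis using idem by (simp add: matrix_vector_mul_assoc)
  qed
  have JP: "J ** P = P"
  proof -
    have "(J ** P) *v x = P *v x" for x
    proof -
      have "(J ** P) *v x = J *v (\<Sum>b\<in>B. (x \<bullet> b) *\<^sub>R b)" by (simp add: matrix_vector_mul_assoc[symmetric] Pv)
      also have "\<dots> = (\<Sum>b\<in>B. (x \<bullet> b) *\<^sub>R (J *v b))"
        using linear_sum[OF matrix_vector_mul_linear[of J], of "\<lambda>b. (x \<bullet> b) *\<^sub>R b" B]
        by (simp add: o_def matrix_vector_mult_scaleR)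
      also have "\<dots> = (\<Sum>b\<in>B. (x \<bullet> b) *\<^sub>R b)"
        using fixJ B(1) by (intro sum.cong) auto
      finally show ?thesis using Pv by simp
    qed
    then show ?thesis using matrix_eq by blast
  qed
  have PJ: "P ** J = J"
  proof -
    have "(P ** J) *v x = J *v x" for x
    proof -
      have inS: "J *v x \<in> span B" using B(6) unfolding S_def col_range_def by auto
      have "(P ** J) *v x = (\<Sum>b\<in>B. ((J *v x) \<bullet> b) *\<^sub>R b)" by (simp add: matrix_vector_mul_assoc[symmetric] Pv)
      also have "\<dots> = J *v x" by (rule orthonormal_basis_expand[OF B(2) B(3) inS finB])
      finally show ?thesis .
    qed
    then show ?thesis using matrix_eq by blast
  qed
  have "trace J = trace (P ** J)" using PJ by simp
  also have "\<dots> = trace (J ** P)" by (rule trace_mul_sym)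
  also have "\<dots> = trace P" using JP by simp
  also have "\<dots> = (\<Sum>a\<in>UNIV. \<Sum>b\<in>B. b$a * b$a)" unfolding trace_def P_def by simp
  also have "\<dots> = (\<Sum>b\<in>B. \<Sum>a\<in>UNIV. b$a * b$a)" by (rule sum.swap)
  also have "\<dots> = (\<Sum>b\<in>B. b \<bullet> b)" by (simp add: inner_vec_def)
  also have "\<dots> = (\<Sum>b\<in>B. 1)" using B(3) norm_eq_1 by (intro sum.cong) auto
  also have "\<dots> = real (card B)" by simp
  also have "\<dots> = real (rank J)" using B(5) S_def by (simp add: rank_col_range)
  finally show ?thesis .
qed

lemma LA_main:
  fixes L J Y :: "real^'n^'n"
  assumes LJ: "L ** J = 0" and C: "J = mat 1 - L ** Y"
    and I1: "\<And>x. L *v (L *v x) = 0 \<Longrightarrow> L *v x = 0"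
  shows "null_space L = col_range J" "col_range L = null_space J" "J ** J = J"
    "rank L + rank J = CARD('n)" "col_range L \<inter> null_space L = {0}"
proof -
  have Jv: "J *v x = x - L *v (Y *v x)" for x
    using C by (simp add: matrix_vector_mult_diff_rdistrib matrix_vector_mul_assoc)
  have LJv: "L *v (J *v x) = 0" for x using LJ by (simp add: matrix_vector_mul_assoc)
  have sub1: "col_range J \<subseteq> null_space L" unfolding col_range_def null_space_def using LJv by auto
  have sub2: "null_space J \<subseteq> col_range L"
  proof
    fix x assume "x \<in> null_space J"
    then have "J *v x = 0" unfolding null_space_def by simp
    then have "x = L *v (Y *v x)" using Jv[of x] by simp
    then show "x \<in> col_range L" unfolding col_range_def by blast
  qed
  have rnL: "rank L + dim (null_space L) = CARD('n)" by (rule rank_nullity)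
  have rnJ: "rank J + dim (null_space J) = CARD('n)" by (rule rank_nullity)
  have d1: "rank J \<le> dim (null_space L)" using dim_subset[OF sub1] by (simp add: rank_col_range)
  have d2: "dim (null_space J) \<le> rank L" using dim_subset[OF sub2] by (simp add: rank_col_range)
  have sum: "rank L + rank J = CARD('n)" using rnL rnJ d1 d2 by linarith
  show "rank L + rank J = CARD('n)" by (rule sum)
  have e1: "col_range J = null_space L"
    by (rule subspace_dim_equal[OF subspace_range subspace_null sub1]) (use rnL sum in \<open>simp add: rank_col_range\<close>)
  then show "null_space L = col_range J" by simp
  show "col_range L = null_space J"
    by (rule subspace_dim_equal[OF subspace_null subspace_range sub2, symmetric]) (use rnJ sum in \<open>simp add: rank_col_range\<close>)
  show int: "col_range L \<inter> null_space L = {0}"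
  proof
    show "col_range L \<inter> null_space L \<subseteq> {0}"
    proof
      fix x assume "x \<in> col_range L \<inter> null_space L"
      then obtain y where "x = L *v y" "L *v x = 0" unfolding col_range_def null_space_def by auto
      then show "x \<in> {0}" using I1[of y] by simp
    qed
    show "{0} \<subseteq> col_range L \<inter> null_space L"
    proof -
      have a: "0 \<in> col_range L" unfolding col_range_iff by (rule exI[of _ 0]) simp
      have b: "0 \<in> null_space L" unfolding null_space_iff by simp
      show ?thesis using a b by simp
    qed
  qed
  have "(J ** J) *v z = J *v z" for z
  proof -
    define u where "u = J *v z"
    have a: "J *v u - u \<in> col_range L" using Jv[of u] unfolding col_range_def
      by (metis (no_types, lifting) diff_diff_eq2 diff_self diff_zero matrix_vector_mult_0_right
          matrix_vector_right_distrib matrix_vector_mult_scaleR rangeI scaleR_minus1_left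
          add.commute minus_diff_eq)
    have b: "J *v u - u \<in> null_space L" unfolding null_space_def u_def
      using LJv by (simp add: matrix_vector_mult_diff_distrib)
    have "J *v u - u = 0" using a b int by blast
    then show ?thesis unfolding u_def by (simp add: matrix_vector_mul_assoc[symmetric])
  qed
  then show "J ** J = J" using matrix_eq by blast
qed



lemma lap_index1:
  fixes W :: "real^'n^'n"
  assumes nonneg: "\<forall>i j. W$i$j \<ge> 0"
    and h: "laplacian W *v (laplacian W *v x) = 0"
  shows "laplacian W *v x = 0"
proof -
  define L where "L = laplacian W"
  define y where "y = L *v x"
  have Ly: "L *v y = 0" using h unfolding y_def L_def .
  define D where "D = (\<lambda>i. \<Sum>k\<in>UNIV. W$i$k)"
  have D0: "D i \<ge> 0" for i unfolding D_def using nonneg by (simp add: sum_nonneg)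
  define c where "c = 1 + (\<Sum>i\<in>UNIV. D i)"
  have Dc: "D i \<le> c" for i
  proof -
    have "D i \<le> (\<Sum>i\<in>UNIV. D i)" by (rule member_le_sum) (use D0 in auto)
    then show ?thesis unfolding c_def by simp
  qed
  have "(\<Sum>i\<in>UNIV. D i) \<ge> 0" using D0 by (simp add: sum_nonneg)
  then have cpos: "c > 0" unfolding c_def by simp
  define M where "M = Max (range (\<lambda>i. \<bar>x$i\<bar>))"
  have M: "\<bar>x$i\<bar> \<le> M" for i unfolding M_def by (rule Max_ge) auto
  have claim: "\<forall>i. \<bar>x$i - (real k / c) * y$i\<bar> \<le> M" for k
  proof (induction k)
    case 0
    then show ?case using M by simp
  next
    case (Suc k)
    define z where "z = x - (real k / c) *\<^sub>R y"
    have zb: "\<bar>z$i\<bar> \<le> M" for i using Suc.IH unfolding z_def by simp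
    have "L *v z = L *v x - (real k / c) *\<^sub>R (L *v y)" unfolding z_def
      by (simp add: matrix_vector_mult_diff_distrib matrix_vector_mult_scaleR)
    then have Lz: "L *v z = y" using Ly unfolding y_def by simp
    show ?case
    proof
      fix i
      have e1: "x$i - (real (Suc k) / c) * y$i = z$i - (1/c) * y$i"
        unfolding z_def by (simp add: field_simps, simp add: add_divide_distrib)
      have yi: "y$i = (\<Sum>j\<in>UNIV. W$i$j * (z$i - z$j))"
        using Lz lap_vec[of W z i] unfolding L_def by simp
      have e2: "z$i - (1/c) * y$i = (1 - D i / c) * z$i + (\<Sum>j\<in>UNIV. (W$i$j / c) * z$j)"
        unfolding yi D_def
        by (simp add: right_diff_distrib sum_subtractf sum_distrib_left sum_divide_distrib
            sum_distrib_right field_simps)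
      have "\<bar>(1 - D i / c) * z$i + (\<Sum>j\<in>UNIV. (W$i$j / c) * z$j)\<bar>
          \<le> \<bar>(1 - D i / c) * z$i\<bar> + \<bar>\<Sum>j\<in>UNIV. (W$i$j / c) * z$j\<bar>"
        by (rule abs_triangle_ineq)
      also have "\<bar>(1 - D i / c) * z$i\<bar> \<le> (1 - D i / c) * M"
      proof -
        have "0 \<le> 1 - D i / c" using Dc[of i] cpos by (simp add: field_simps)
        then show ?thesis using zb[of i] by (simp add: abs_mult mult_left_mono)
      qed
      also have "\<bar>\<Sum>j\<in>UNIV. (W$i$j / c) * z$j\<bar> \<le> (\<Sum>j\<in>UNIV. (W$i$j / c) * M)"
      proof -
        have "\<bar>\<Sum>j\<in>UNIV. (W$i$j / c) * z$j\<bar> \<le> (\<Sum>j\<in>UNIV. \<bar>(W$i$j / c) * z$j\<bar>)" by (rule sum_abs)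
        also have "\<dots> \<le> (\<Sum>j\<in>UNIV. (W$i$j / c) * M)"
        proof (rule sum_mono)
          fix j
          have nn: "0 \<le> W$i$j / c" using nonneg cpos by simp
          then have "\<bar>(W$i$j / c) * z$j\<bar> = (W$i$j / c) * \<bar>z$j\<bar>" by (metis abs_mult abs_of_nonneg)
          then show "\<bar>(W$i$j / c) * z$j\<bar> \<le> (W$i$j / c) * M"
            using mult_left_mono[OF zb[of j] nn] by simp
        qed
        finally show ?thesis .
      qed
      also have "(1 - D i / c) * M + (\<Sum>j\<in>UNIV. (W$i$j / c) * M) = M"
      proof -
        have "(\<Sum>j\<in>UNIV. (W$i$j / c) * M) = (D i / c) * M"
          unfolding D_def by (simp add: sum_distrib_right[symmetric] sum_divide_distrib[symmetric])
        then show ?thesis using cpos by (simp add: algebra_simps)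
      qed
      finally show "\<bar>x$i - (real (Suc k) / c) * y$i\<bar> \<le> M" using e1 e2 by simp
    qed
  qed
  have "y$i = 0" for i
  proof (rule ccontr)
    assume ne: "y$i \<noteq> 0"
    then have ay: "\<bar>y$i\<bar> > 0" by simp
    obtain k :: nat where k: "c * (M + \<bar>x$i\<bar>) / \<bar>y$i\<bar> < real k" using reals_Archimedean2 by blast
    then have "c * (M + \<bar>x$i\<bar>) < real k * \<bar>y$i\<bar>" using ay by (simp add: field_simps)
    then have "M + \<bar>x$i\<bar> < (real k / c) * \<bar>y$i\<bar>" using cpos by (simp add: field_simps)
    moreover have "(real k / c) * \<bar>y$i\<bar> \<le> \<bar>x$i - (real k / c) * y$i\<bar> + \<bar>x$i\<bar>"
    proof -
      have "\<bar>(real k / c) * y$i\<bar> = (real k / c) * \<bar>y$i\<bar>" using cpos by (simp add: abs_mult)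
      moreover have "\<bar>(real k / c) * y$i\<bar> \<le> \<bar>x$i - (real k / c) * y$i\<bar> + \<bar>x$i\<bar>"
        using abs_triangle_ineq[of "(real k / c) * y$i - x$i" "x$i"] by (simp add: abs_minus_commute)
      ultimately show ?thesis by simp
    qed
    moreover have "\<bar>x$i - (real k / c) * y$i\<bar> \<le> M" using claim[of k] by blast
    moreover have "\<And>(M::real) a b t. M + b < a \<Longrightarrow> a \<le> t + b \<Longrightarrow> t \<le> M \<Longrightarrow> False" by linarith
    ultimately show False by blast
  qed
  then show ?thesis unfolding y_def L_def by (simp add: vec_eq_iff)
qed

lemma mat_pow_1: "mat_pow A 1 = A"
  unfolding mat_pow_def by simp

lemma mat_pow_2: "mat_pow A 2 = A ** A"
  unfolding mat_pow_def by (simp add: numeral_2_eq_2)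

theorem proposition12:
  fixes W :: "real^'n^'n"
  assumes n_gt1: "CARD('n) > 1"
    and nonneg: "\<forall>i j. W $ i $ j \<ge> 0"
    and no_loops: "\<forall>i. W $ i $ i = 0"
  defines "L \<equiv> laplacian W"
    and "d \<equiv> forest_dim W"
    and "J \<equiv> norm_max_forest_matrix W"
  shows "invertible (L + transpose J)
    \<and> (rank L = CARD('n) - rank J \<and> CARD('n) - rank J = CARD('n) - d)
    \<and> (null_space L = col_range J \<and> col_range L = null_space J)
    \<and> col_range L \<inter> col_range J = {0}
    \<and> mat_index L = 1
    \<and> eigenprojection L J"
proof -
  have LJ: "L ** J = 0" unfolding L_def J_def by (rule LJ_zero[OF nonneg])
  obtain Y where C: "J = mat 1 - L ** Y" using J_form[OF nonneg] unfolding L_def J_def by blast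
  have I1: "L *v (L *v x) = 0 \<Longrightarrow> L *v x = 0" for x unfolding L_def by (rule lap_index1[OF nonneg])
  note LA = LA_main[OF LJ C I1]
  have rJ: "rank J = d"
    using trace_idem[OF LA(3)] trace_J[of W] unfolding J_def d_def by simp
  have d1: "1 \<le> d" unfolding d_def by (rule dims(3))
  have rL: "rank L = CARD('n) - rank J" using LA(4) by simp
  have ii: "rank L = CARD('n) - rank J \<and> CARD('n) - rank J = CARD('n) - d" using rL rJ by simp
  have iv: "col_range L \<inter> col_range J = {0}" using LA(1) LA(5) by simp
  have nsLL: "null_space (L ** L) = null_space L"
    using I1 unfolding null_space_def by (auto simp: matrix_vector_mul_assoc[symmetric])
  have rLL: "rank (L ** L) = rank L"
    using rank_nullity[of "L ** L"] rank_nullity[of L] nsLL by simp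
  have rLn: "rank L \<noteq> CARD('n)" using LA(4) rJ d1 by simp
  have v: "mat_index L = 1"
    unfolding mat_index_def
  proof (rule Least_equality)
    show "rank (mat_pow L (Suc 1)) = rank (mat_pow L 1)"
      using rLL mat_pow_2[of L] mat_pow_1[of L] by (simp add: numeral_2_eq_2)
    fix k assume "rank (mat_pow L (Suc k)) = rank (mat_pow L k)"
    then show "1 \<le> k"
      using rLn rank_I mat_pow_1[of L] by (cases k) (auto simp: mat_pow_def)
  qed
  have vi: "eigenprojection L J"
    unfolding eigenprojection_def v mat_pow_1 using LA by simp
  have i: "invertible (L + transpose J)"
  proof -
    have ker: "x = 0" if hx: "(L + transpose J) *v x = 0" for x
    proof -
      define u where "u = L *v x"
      define v where "v = transpose J *v x"
      have uv: "u + v = 0" using hx unfolding u_def v_def by (simp add: matrix_vector_mult_add_rdistrib)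
      have Ju: "J *v u = 0"
      proof -
        have "u \<in> col_range L" unfolding u_def col_range_iff by blast
        then show ?thesis using LA(2) null_space_iff by blast
      qed
      have vu: "v \<bullet> u = 0"
        unfolding v_def transpose_matrix_vector dot_lmul_matrix Ju by simp
      have "u = - v" using uv by (simp add: eq_neg_iff_add_eq_0)
      then have "u \<bullet> u = - (v \<bullet> u)" by simp
      then have u0: "u = 0" using vu by simp
      then have v0: "v = 0" using uv by simp
      have "x \<in> null_space L" using u0 unfolding u_def null_space_iff .
      then obtain z where xz: "x = J *v z" using LA(1) col_range_iff by blast
      have "x \<bullet> x = x \<bullet> (J *v z)" using xz by simp
      also have "\<dots> = (x v* J) \<bullet> z" by (simp add: dot_lmul_matrix)
      also have "\<dots> = v \<bullet> z" unfolding v_def by simp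
      finally show "x = 0" using v0 by simp
    qed
    have "inj ((*v) (L + transpose J))"
    proof (rule injI)
      fix x y assume "(L + transpose J) *v x = (L + transpose J) *v y"
      then have "(L + transpose J) *v (x - y) = 0" by (simp add: matrix_vector_mult_diff_distrib)
      then have "x - y = 0" by (rule ker)
      then show "x = y" by simp
    qed
    then show ?thesis using matrix_left_invertible_injective invertible_left_inverse by blast
  qed
  show ?thesis using i ii LA(1) LA(2) iv v vi by simp
qed

end
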